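(* There exists $k_0>0$ such that for every $k\ge k_0$ the following hold. (i) For every $\varepsilon\in(0,1)$ there exists a positive entire radial solution $u$ of the initial value problem $$\Delta^3u=-\frac{1}{u^3},\quad u(0)=k,\quad \Delta u(0)=-\varepsilon,\quad \Delta^2u(0)=1,\quad u'(0)=(\Delta u)'(0)=(\Delta^2u)'(0)=0. \tag{P}$$ (ii) If $u$ is a positive entire radial solution of (P) for some $\varepsilon\in\mathbb{R}$, then necessarily $\varepsilon\le\sqrt{6k/5}$, and $$k-\frac{\varepsilon}{6}r^2\le u(r)\le k-\frac{\varepsilon}{6}r^2+\frac{r^4}{120}\quad\text{for all } r\in(0,\infty).$$
   Context: A radial function on $\mathbb{R}^3$ is written $u(r)$, $r=|x|$; for radial functions $\Delta w=w''+\frac{2}{r}w'$. A positive entire radial solution of (P) is a radial function $u$ defined and positive on all of $\mathbb{R}^3$ (i.e. $r\in[0,\infty)$), smooth, solving the ODE with the stated initial conditions at $r=0$. *)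

theory Defs
  imports "HOL-Analysis.Analysis"
begin

text \<open>A radial function on R^3 is represented by its profile u :: real => real.
  u(|x|) is smooth on R^3 iff the profile extends to an even C^infinity function on R;
  we represent profiles by such even smooth extensions.\<close>

definition smooth_fun :: "(real \<Rightarrow> real) \<Rightarrow> bool" where
  "smooth_fun f \<longleftrightarrow> (\<forall>n x. ((deriv ^^ n) f) differentiable (at x))"

definition even_fun :: "(real \<Rightarrow> real) \<Rightarrow> bool" where
  "even_fun f \<longleftrightarrow> (\<forall>r. f (- r) = f r)"

text \<open>Radial Laplacian in R^3: w'' + (2/r) w' for r \<noteq> 0, extended at r = 0 by its
  limit value 3 w''(0) (valid for smooth even profiles).\<close>

definition rlap :: "(real \<Rightarrow> real) \<Rightarrow> real \<Rightarrow> real" where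
  "rlap w = (\<lambda>r. if r = 0 then 3 * deriv (deriv w) 0
                 else deriv (deriv w) r + 2 / r * deriv w r)"

definition pos_entire_radial_sol :: "real \<Rightarrow> real \<Rightarrow> (real \<Rightarrow> real) \<Rightarrow> bool" where
  "pos_entire_radial_sol k \<epsilon> u \<longleftrightarrow>
     smooth_fun u \<and> even_fun u \<and> (\<forall>r\<ge>0. u r > 0) \<and>
     (\<forall>r\<ge>0. rlap (rlap (rlap u)) r = - 1 / (u r) ^ 3) \<and>
     u 0 = k \<and> rlap u 0 = - \<epsilon> \<and> rlap (rlap u) 0 = 1 \<and>
     deriv u 0 = 0 \<and> deriv (rlap u) 0 = 0 \<and> deriv (rlap (rlap u)) 0 = 0"

end

theory Submission
  imports Defs
begin

fun Ck :: "nat \<Rightarrow> (real \<Rightarrow> real) \<Rightarrow> bool" where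
  "Ck 0 f = continuous_on UNIV f"
| "Ck (Suc n) f = ((\<forall>x. f differentiable (at x)) \<and> Ck n (deriv f))"

lemma Ck_Suc_D: "Ck (Suc n) f \<Longrightarrow> Ck n f"
proof (induction n arbitrary: f)
  case 0
  then show ?case
    by (auto intro!: continuous_at_imp_continuous_on differentiable_imp_continuous_within)
next
  case (Suc n)
  then show ?case by auto
qed

lemma Ck_le: "m \<le> n \<Longrightarrow> Ck n f \<Longrightarrow> Ck m f"
proof (induction n rule: dec_induct)
  case base
  then show ?case by simp
next
  case (step n)
  then show ?case using Ck_Suc_D by blast
qed

lemma Ck_cont: "Ck n f \<Longrightarrow> continuous_on UNIV f"
  using Ck_le[of 0 n f] by simp

lemma Ck_DERIV: "Ck (Suc n) f \<Longrightarrow> DERIV f x :> deriv f x"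
  by (simp add: DERIV_deriv_iff_real_differentiable)

lemma Ck_deriv: "Ck (Suc n) f \<Longrightarrow> Ck n (deriv f)"
  by simp

lemma Ck_const: "Ck n (\<lambda>_. c)"
proof (induction n arbitrary: c)
  case 0 then show ?case by simp
next
  case (Suc n)
  have "deriv (\<lambda>_. c) = (\<lambda>_. 0::real)" by (rule ext) (rule DERIV_imp_deriv, auto)
  then show ?case using Suc by simp
qed

lemma Ck_id: "Ck n (\<lambda>x. x)"
proof (cases n)
  case 0 then show ?thesis by simp
next
  case (Suc m)
  have "deriv (\<lambda>x. x) = (\<lambda>_. 1::real)" by (rule ext) (rule DERIV_imp_deriv, auto)
  then show ?thesis using Suc Ck_const by simp
qed

lemma Ck_add: "Ck n f \<Longrightarrow> Ck n g \<Longrightarrow> Ck n (\<lambda>x. f x + g x)"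
proof (induction n arbitrary: f g)
  case 0 then show ?case by (auto intro!: continuous_intros)
next
  case (Suc n)
  have "deriv (\<lambda>x. f x + g x) = (\<lambda>x. deriv f x + deriv g x)"
    using Suc.prems by (intro ext DERIV_imp_deriv derivative_intros Ck_DERIV)
  then show ?case using Suc by auto
qed

lemma Ck_mult: "Ck n f \<Longrightarrow> Ck n g \<Longrightarrow> Ck n (\<lambda>x. f x * g x)"
proof (induction n arbitrary: f g)
  case 0 then show ?case by (auto intro!: continuous_intros)
next
  case (Suc n)
  have df: "\<And>x. DERIV f x :> deriv f x" "\<And>x. DERIV g x :> deriv g x"
    using Suc.prems by (auto simp: DERIV_deriv_iff_real_differentiable)
  have "deriv (\<lambda>x. f x * g x) = (\<lambda>x. deriv f x * g x + f x * deriv g x)"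
    by (intro ext DERIV_imp_deriv) (auto intro!: derivative_eq_intros df)
  moreover have "Ck n (\<lambda>x. deriv f x * g x + f x * deriv g x)"
    using Suc Ck_Suc_D[OF Suc.prems(1)] Ck_Suc_D[OF Suc.prems(2)] by (intro Ck_add Suc.IH) auto
  ultimately show ?case using Suc by auto
qed

lemma Ck_minus: "Ck n f \<Longrightarrow> Ck n (\<lambda>x. - f x)"
  using Ck_mult[OF Ck_const[of n "-1"], of f] by simp

lemma Ck_diff: "Ck n f \<Longrightarrow> Ck n g \<Longrightarrow> Ck n (\<lambda>x. f x - g x)"
  using Ck_add[of n f "\<lambda>x. - g x"] Ck_minus[of n g] by simp

lemma Ck_inverse: "Ck n f \<Longrightarrow> (\<And>x. f x \<noteq> 0) \<Longrightarrow> Ck n (\<lambda>x. inverse (f x))"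
proof (induction n arbitrary: f)
  case 0 then show ?case by (auto intro!: continuous_intros)
next
  case (Suc n)
  have df: "\<And>x. DERIV f x :> deriv f x"
    using Suc.prems by (auto simp: DERIV_deriv_iff_real_differentiable)
  have "deriv (\<lambda>x. inverse (f x)) = (\<lambda>x. - (deriv f x * (inverse (f x) * inverse (f x))))"
    using Suc.prems by (intro ext DERIV_imp_deriv) (auto intro!: derivative_eq_intros df simp: power2_eq_square)
  moreover have "Ck n (\<lambda>x. - (deriv f x * (inverse (f x) * inverse (f x))))"
    using Suc Ck_Suc_D[OF Suc.prems(1)] by (intro Ck_minus Ck_mult Suc.IH) auto
  moreover have "\<forall>x. (\<lambda>x. inverse (f x)) differentiable at x"
  proof
    fix x
    have "DERIV (\<lambda>x. inverse (f x)) x :> - (deriv f x * (inverse (f x) * inverse (f x)))"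
      using Suc.prems by (auto intro!: derivative_eq_intros df simp: power2_eq_square)
    then show "(\<lambda>x. inverse (f x)) differentiable at x"
      using real_differentiable_def by blast
  qed
  ultimately show ?case by simp
qed

lemma Ck_funpow: "Ck (j + n) f \<Longrightarrow> Ck n ((deriv ^^ j) f)"
proof (induction j arbitrary: f)
  case 0 then show ?case by simp
next
  case (Suc j)
  then have "Ck (j + n) (deriv f)" by simp
  then have "Ck n ((deriv ^^ j) (deriv f))" using Suc.IH by blast
  then show ?case by (simp add: funpow_Suc_right del: funpow.simps)
qed

lemma smooth_from_Ck: "(\<And>n. Ck n f) \<Longrightarrow> smooth_fun f"
  unfolding smooth_fun_def
proof (intro allI)
  fix n x assume "\<And>n. Ck n f"
  then have "Ck 1 ((deriv ^^ n) f)" using Ck_funpow[of n 1 f] by simp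
  then show "(deriv ^^ n) f differentiable at x" by simp
qed

lemma Ck_from_smooth: "smooth_fun f \<Longrightarrow> Ck n f"
proof -
  assume s: "smooth_fun f"
  have "Ck n ((deriv ^^ j) f)" for j
  proof (induction n arbitrary: j)
    case 0
    then show ?case using s unfolding smooth_fun_def
      by (auto intro!: continuous_at_imp_continuous_on differentiable_imp_continuous_within)
  next
    case (Suc n)
    then show ?case using s unfolding smooth_fun_def
      using Suc.IH[of "Suc j"] by simp
  qed
  from this[of 0] show ?thesis by simp
qed

lemma Ck_pow: "Ck n f \<Longrightarrow> Ck n (\<lambda>x. f x ^ m)"
  by (induction m) (auto intro: Ck_mult Ck_const)

lemma Ck_poly: "Ck n (\<lambda>r. a + b * r^2 + c * r^4)"
  by (intro Ck_add Ck_mult Ck_const Ck_pow Ck_id)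


section \<open>Integral operators\<close>

definition K :: "(real \<Rightarrow> real) \<Rightarrow> (real \<Rightarrow> real) \<Rightarrow> real \<Rightarrow> real" where
  "K w g r = integral {0..1} (\<lambda>s. w s * g (r * s))"

lemma FTC_int:
  fixes F f :: "real \<Rightarrow> real"
  assumes "a \<le> b" "\<And>s. s \<in> {a..b} \<Longrightarrow> DERIV F s :> f s"
  shows "(f has_integral (F b - F a)) {a..b}"
  using assms
  by (intro fundamental_theorem_of_calculus)
     (auto simp: has_real_derivative_iff_has_vector_derivative[symmetric] intro: has_field_derivative_at_within)

lemma K_cont:
  assumes "continuous_on UNIV w" "continuous_on UNIV g"
  shows "continuous_on UNIV (K w g)"
proof -
  have "continuous_on (UNIV \<times> cbox 0 1) (\<lambda>(x, t). w t * g (x * t))"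
    unfolding split_beta
    by (intro continuous_intros continuous_on_compose2[OF assms(1)] continuous_on_compose2[OF assms(2)]) auto
  from integral_continuous_on_param[OF this] show ?thesis
    unfolding K_def[abs_def] by simp
qed

lemma K_DERIV:
  assumes w: "continuous_on UNIV w" and dg: "\<And>x. DERIV g x :> g' x" and g': "continuous_on UNIV g'"
  shows "DERIV (K w g) r :> K (\<lambda>s. w s * s) g' r"
proof -
  have cg: "continuous_on UNIV g"
    using dg by (meson DERIV_isCont continuous_at_imp_continuous_on)
  have "((\<lambda>x. integral (cbox 0 1) (\<lambda>t. w t * g (x * t))) has_field_derivative
          integral (cbox 0 1) (\<lambda>t. w t * (g' (r * t) * t))) (at r within UNIV)"
  proof (rule leibniz_rule_field_derivative)
    fix x :: real and t :: real
    show "((\<lambda>x. w t * g (x * t)) has_field_derivative w t * (g' (x * t) * t)) (at x within UNIV)"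
      by (auto intro!: derivative_eq_intros DERIV_chain2[OF dg])
  next
    fix x :: real
    show "(\<lambda>t. w t * g (x * t)) integrable_on cbox 0 1"
      by (intro integrable_continuous continuous_intros continuous_on_compose2[OF w] continuous_on_compose2[OF cg]) auto
  next
    show "continuous_on (UNIV \<times> cbox 0 1) (\<lambda>(x, t). w t * (g' (x * t) * t))"
      unfolding split_beta
      by (intro continuous_intros continuous_on_compose2[OF w] continuous_on_compose2[OF g']) auto
  qed auto
  then show ?thesis
    unfolding K_def[abs_def] by (simp add: mult_ac)
qed

lemma Ck_K: "continuous_on UNIV w \<Longrightarrow> Ck n g \<Longrightarrow> Ck n (K w g)"
proof (induction n arbitrary: w g)
  case 0
  then show ?case using K_cont by simp
next
  case (Suc n)
  have dg: "\<And>x. DERIV g x :> deriv g x"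
    using Suc.prems by (auto simp: DERIV_deriv_iff_real_differentiable)
  have cg': "continuous_on UNIV (deriv g)"
    using Suc.prems Ck_cont by auto
  have D: "\<And>r. DERIV (K w g) r :> K (\<lambda>s. w s * s) (deriv g) r"
    by (rule K_DERIV[OF Suc.prems(1) dg cg'])
  then have "deriv (K w g) = K (\<lambda>s. w s * s) (deriv g)"
    by (intro ext DERIV_imp_deriv)
  moreover have "Ck n (K (\<lambda>s. w s * s) (deriv g))"
    using Suc by (intro Suc.IH) (auto intro!: continuous_intros)
  moreover have "\<forall>x. K w g differentiable at x"
    using D real_differentiable_def by blast
  ultimately show ?case by simp
qed

lemma K_even: "even_fun g \<Longrightarrow> K w g (- r) = K w g r"
  unfolding K_def even_fun_def by (metis minus_mult_left)

lemma K_at0: "K w g 0 = integral {0..1} w * g 0"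
  unfolding K_def by simp

lemma subst01:
  fixes h :: "real \<Rightarrow> real"
  assumes r: "r > 0"
  shows "integral {0..1} (\<lambda>s. h (r * s)) = integral {0..r} h / r"
proof -
  have img: "(\<lambda>x. x / r) ` {0..r} = {0..1}"
  proof
    show "(\<lambda>x. x / r) ` {0..r} \<subseteq> {0..1}" using r by auto
    show "{0..1} \<subseteq> (\<lambda>x. x / r) ` {0..r}"
    proof
      fix s :: real assume "s \<in> {0..1}"
      then have "r * s \<in> {0..r}" "s = (r * s) / r" using r by (auto simp: mult_le_cancel_left1)
      then show "s \<in> (\<lambda>x. x / r) ` {0..r}" by blast
    qed
  qed
  show ?thesis
    using integral_stretch_real[of r 0 r h] r img by simp
qed

lemma int_const01: "integral {0..1} (\<lambda>s::real. c) = (c::real)"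
proof -
  have "((\<lambda>s. c) has_integral ((\<lambda>s. c * s) 1 - (\<lambda>s. c * s) 0)) {0..1::real}"
    by (rule FTC_int) (auto intro!: derivative_eq_intros)
  then have "((\<lambda>s. c) has_integral c) {0..1::real}" by simp
  then show ?thesis by (rule integral_unique)
qed

lemma int_rho: "integral {0..1} (\<lambda>s. s * (1 - s)) = (1/6::real)"
proof -
  have "((\<lambda>s. s * (1 - s)) has_integral ((\<lambda>s. s^2/2 - s^3/3) 1 - (\<lambda>s. s^2/2 - s^3/3) 0)) {0..1::real}"
    by (rule FTC_int) (auto intro!: derivative_eq_intros simp: algebra_simps power2_eq_square)
  then show ?thesis by (simp add: integral_unique)
qed

lemma int_sq: "integral {0..1} (\<lambda>s. s^2) = (1/3::real)"
proof -
  have "((\<lambda>s. s^2) has_integral ((\<lambda>s. s^3/3) 1 - (\<lambda>s. s^3/3) 0)) {0..1::real}"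
    by (rule FTC_int) (auto intro!: derivative_eq_intros simp: algebra_simps power2_eq_square)
  then show ?thesis by (simp add: integral_unique)
qed

lemma int_rho_sq: "integral {0..1} (\<lambda>s. s * (1 - s) * s^2) = (1/20::real)"
proof -
  have "((\<lambda>s. s * (1 - s) * s^2) has_integral ((\<lambda>s. s^4/4 - s^5/5) 1 - (\<lambda>s. s^4/4 - s^5/5) 0)) {0..1::real}"
    by (rule FTC_int) (auto intro!: derivative_eq_intros simp: algebra_simps power2_eq_square power3_eq_cube power4_eq_xxxx eval_nat_numeral)
  then show ?thesis by (simp add: integral_unique)
qed


definition Iop :: "(real \<Rightarrow> real) \<Rightarrow> real \<Rightarrow> real" where
  "Iop g r = r^2 * K (\<lambda>s. s * (1 - s)) g r"

lemma Iop_even: "even_fun g \<Longrightarrow> Iop g (- r) = Iop g r"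
  unfolding Iop_def using K_even by simp

lemma even_Iop: "even_fun g \<Longrightarrow> even_fun (Iop g)"
  using Iop_even unfolding even_fun_def by blast

lemma Iop_cont: "continuous_on UNIV g \<Longrightarrow> continuous_on UNIV (Iop g)"
proof -
  assume g: "continuous_on UNIV g"
  have "continuous_on UNIV (K (\<lambda>s. s*(1-s)) g)" by (rule K_cont) (auto intro!: continuous_intros g)
  then show ?thesis unfolding Iop_def[abs_def] by (auto intro!: continuous_intros)
qed

lemma Iop_at0: "Iop g 0 = 0"
  unfolding Iop_def by simp

lemma I_repr:
  assumes r: "r > 0" and g: "continuous_on UNIV g"
  shows "Iop g r = integral {0..r} (\<lambda>t. t * g t) - integral {0..r} (\<lambda>t. t^2 * g t) / r"
proof -
  let ?h = "\<lambda>t. (1/r) * (t * g t) - (1/r^2) * (t^2 * g t)"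
  have "K (\<lambda>s. s * (1 - s)) g r = integral {0..1} (\<lambda>s. ?h (r * s))"
    unfolding K_def using r by (intro integral_cong) (simp add: field_simps power2_eq_square)
  also have "\<dots> = integral {0..r} ?h / r" by (rule subst01[OF r])
  also have "integral {0..r} ?h = (1/r) * integral {0..r} (\<lambda>t. t * g t) - (1/r^2) * integral {0..r} (\<lambda>t. t^2 * g t)"
    using r by (subst integral_diff)
       (auto intro!: integrable_continuous_real continuous_intros continuous_on_subset[OF g])
  finally show ?thesis unfolding Iop_def using r by (simp add: field_simps power2_eq_square)
qed

lemma K2_repr:
  assumes r: "r > 0"
  shows "K (\<lambda>s. s^2) g r = integral {0..r} (\<lambda>t. t^2 * g t) / r^3"
proof -
  have "K (\<lambda>s. s^2) g r = integral {0..1} (\<lambda>s. (\<lambda>t. (1/r^2) * (t^2 * g t)) (r * s))"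
    unfolding K_def using r by (intro integral_cong) (simp add: field_simps power2_eq_square)
  also have "\<dots> = integral {0..r} (\<lambda>t. (1/r^2) * (t^2 * g t)) / r" by (rule subst01[OF r])
  finally show ?thesis by (simp add: field_simps power2_eq_square power3_eq_cube)
qed

lemma int_DERIV:
  fixes h :: "real \<Rightarrow> real"
  assumes r: "r > 0" and h: "continuous_on UNIV h"
  shows "DERIV (\<lambda>x. integral {0..x} h) r :> h r"
proof -
  have "((\<lambda>x. integral {0..x} h) has_real_derivative h r) (at r within {0..r+1})"
    by (rule integral_has_real_derivative) (use r continuous_on_subset[OF h] in auto)
  moreover have "r \<in> interior {0..r+1}" using r by simp
  ultimately show ?thesis using at_within_interior by metis
qed

lemma I_DERIV:
  assumes g: "continuous_on UNIV g" and ev: "even_fun g"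
  shows "DERIV (Iop g) r :> r * K (\<lambda>s. s^2) g r"
proof -
  have pos: "DERIV (Iop g) r :> r * K (\<lambda>s. s^2) g r" if r: "r > 0" for r
  proof -
    let ?G1 = "\<lambda>x. integral {0..x} (\<lambda>t. t * g t)"
    let ?G2 = "\<lambda>x. integral {0..x} (\<lambda>t. t^2 * g t)"
    have d1: "DERIV ?G1 r :> r * g r"
      by (rule int_DERIV[OF r]) (auto intro!: continuous_intros g)
    have d2: "DERIV ?G2 r :> r^2 * g r"
      by (rule int_DERIV[OF r]) (auto intro!: continuous_intros g)
    have "DERIV (\<lambda>x. ?G1 x - ?G2 x / x) r :> r * g r - (r^2 * g r * r - ?G2 r * 1) / (r * r)"
      using r by (auto intro!: derivative_eq_intros d1 d2)
    moreover have "r * g r - (r^2 * g r * r - ?G2 r * 1) / (r * r) = r * K (\<lambda>s. s^2) g r"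
      using r K2_repr[OF r, of g] by (simp add: field_simps power2_eq_square power3_eq_cube)
    ultimately have "DERIV (\<lambda>x. ?G1 x - ?G2 x / x) r :> r * K (\<lambda>s. s^2) g r" by simp
    then show ?thesis
      by (rule has_field_derivative_transform_within_open[where S="{0<..}"])
         (use r I_repr[OF _ g] in auto)
  qed
  show ?thesis
  proof (cases "r > 0")
    case True then show ?thesis using pos by blast
  next
    case False
    show ?thesis
    proof (cases "r = 0")
      case True
      have "DERIV (Iop g) 0 :> 0"
        unfolding CARAT_DERIV
      proof (intro exI conjI allI)
        show "Iop g z - Iop g 0 = z * K (\<lambda>s. s * (1 - s)) g z * (z - 0)" for z
          unfolding Iop_def by (simp add: power2_eq_square)
        have "continuous_on UNIV (\<lambda>z. z * K (\<lambda>s. s * (1 - s)) g z)"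
          by (auto intro!: continuous_intros K_cont g)
        then show "isCont (\<lambda>z. z * K (\<lambda>s. s * (1 - s)) g z) 0"
          by (simp add: continuous_on_eq_continuous_at)
      qed simp
      then show ?thesis using True by simp
    next
      case False
      with \<open>\<not> r > 0\<close> have "- r > 0" by simp
      from DERIV_mirror[where f="Iop g" and x=r and y="(- r) * K (\<lambda>s. s^2) g (- r)"] pos[OF this]
      have "DERIV (\<lambda>x. Iop g (- x)) r :> - ((- r) * K (\<lambda>s. s^2) g (- r))"
        by blast
      moreover have "(\<lambda>x. Iop g (- x)) = Iop g" using Iop_even[OF ev] by auto
      ultimately show ?thesis using K_even[OF ev] by simp
    qed
  qed
qed

lemma deriv_Iop: "continuous_on UNIV g \<Longrightarrow> even_fun g \<Longrightarrow> deriv (Iop g) = (\<lambda>r. r * K (\<lambda>s. s^2) g r)"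
  by (intro ext DERIV_imp_deriv I_DERIV)

lemma Ck_Iop: "even_fun g \<Longrightarrow> Ck n g \<Longrightarrow> Ck (Suc n) (Iop g)"
proof -
  assume ev: "even_fun g" and g: "Ck n g"
  have cg: "continuous_on UNIV g" using Ck_cont[OF g] .
  have "\<forall>x. Iop g differentiable at x"
    using I_DERIV[OF cg ev] real_differentiable_def by blast
  moreover have "Ck n (\<lambda>r. r * K (\<lambda>s. s^2) g r)"
    by (intro Ck_mult Ck_id Ck_K g) (auto intro!: continuous_intros)
  ultimately show ?thesis using deriv_Iop[OF cg ev] by simp
qed




section \<open>Radial Laplacian computations\<close>

lemma Ck_DERIV2: "Ck (Suc (Suc n)) f \<Longrightarrow> DERIV (deriv f) x :> deriv (deriv f) x"
  by (simp add: DERIV_deriv_iff_real_differentiable)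

lemma rlap_Iop:
  assumes ev: "even_fun g" and g: "Ck 1 g"
  shows "rlap (Iop g) r = g r"
proof -
  have cg: "continuous_on UNIV g" using Ck_cont[OF g] .
  have dg: "\<And>x. DERIV g x :> deriv g x" using g Ck_DERIV[of 0 g] by simp
  have cdg: "continuous_on UNIV (deriv g)" using g by simp
  let ?H = "K (\<lambda>s. s^2) g"
  let ?H3 = "K (\<lambda>s. s^2 * s) (deriv g)"
  have dH: "\<And>x. DERIV ?H x :> ?H3 x"
    by (rule K_DERIV[OF _ dg cdg]) (auto intro!: continuous_intros)
  have d1: "deriv (Iop g) = (\<lambda>x. x * ?H x)" by (rule deriv_Iop[OF cg ev])
  have d2: "deriv (\<lambda>x. x * ?H x) x = ?H x + x * ?H3 x" for x
    by (rule DERIV_imp_deriv) (auto intro!: derivative_eq_intros dH)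
  show ?thesis
  proof (cases "r = 0")
    case True
    then show ?thesis unfolding rlap_def d1 d2 using K_at0[of "\<lambda>s. s^2" g] int_sq by simp
  next
    case False
    have "((\<lambda>s. 3 * s^2 * g (r * s) + s^3 * (deriv g (r * s) * r)) has_integral
            ((\<lambda>s. s^3 * g (r * s)) 1 - (\<lambda>s. s^3 * g (r * s)) 0)) {0..1}"
      by (rule FTC_int) (auto intro!: derivative_eq_intros DERIV_chain2[OF dg] simp: power2_eq_square power3_eq_cube)
    from integral_unique[OF this]
    have "integral {0..1} (\<lambda>s. 3 * s^2 * g (r * s) + s^3 * (deriv g (r * s) * r)) = g r"
      by simp
    moreover have "integral {0..1} (\<lambda>s. 3 * s^2 * g (r * s) + s^3 * (deriv g (r * s) * r))
        = 3 * ?H r + r * ?H3 r"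
    proof -
      have i1: "(\<lambda>s. 3 * s^2 * g (r * s)) integrable_on {0..1}"
        by (intro integrable_continuous_real continuous_intros continuous_on_compose2[OF cg]) auto
      have i2: "(\<lambda>s. s^3 * (deriv g (r * s) * r)) integrable_on {0..1}"
        by (intro integrable_continuous_real continuous_intros continuous_on_compose2[OF cdg]) auto
      have "integral {0..1} (\<lambda>s. 3 * s^2 * g (r * s) + s^3 * (deriv g (r * s) * r))
          = integral {0..1} (\<lambda>s. 3 * (s^2 * g (r * s))) + integral {0..1} (\<lambda>s. r * (s^2 * s * deriv g (r * s)))"
        using integral_add[OF i1 i2] by (simp add: mult_ac power3_eq_cube power2_eq_square)
      also have "\<dots> = 3 * ?H r + r * ?H3 r"
        unfolding K_def by simp
      finally show ?thesis .
    qed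
    ultimately show ?thesis unfolding rlap_def d1 d2 using False by (simp add: field_simps)
  qed
qed

lemma rlap_K1:
  assumes f: "Ck 2 f" and f0: "deriv f 0 = 0"
  shows "rlap f = (\<lambda>r. deriv (deriv f) r + 2 * K (\<lambda>_. 1) (deriv (deriv f)) r)"
proof
  fix r :: real
  have d2: "\<And>x. DERIV (deriv f) x :> deriv (deriv f) x"
    using f Ck_DERIV2[of 0 f] by (simp add: numeral_2_eq_2)
  have cd2: "continuous_on UNIV (deriv (deriv f))"
    using f Ck_cont[of 0 "deriv (deriv f)"] by (simp add: numeral_2_eq_2)
  show "rlap f r = deriv (deriv f) r + 2 * K (\<lambda>_. 1) (deriv (deriv f)) r"
  proof (cases "r = 0")
    case True
    then show ?thesis unfolding rlap_def using K_at0[of "\<lambda>_. 1"] int_const01[of 1] by simp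
  next
    case False
    have "((\<lambda>s. deriv (deriv f) (r * s) * r) has_integral
            ((\<lambda>s. deriv f (r * s)) 1 - (\<lambda>s. deriv f (r * s)) 0)) {0..1}"
      by (rule FTC_int) (auto intro!: derivative_eq_intros DERIV_chain2[OF d2])
    from integral_unique[OF this]
    have "integral {0..1} (\<lambda>s. deriv (deriv f) (r * s) * r) = deriv f r"
      using f0 by simp
    moreover have "integral {0..1} (\<lambda>s. deriv (deriv f) (r * s) * r) = r * K (\<lambda>_. 1) (deriv (deriv f)) r"
      unfolding K_def by (simp add: mult.commute)
    ultimately have "deriv f r = r * K (\<lambda>_. 1) (deriv (deriv f)) r" by simp
    then show ?thesis unfolding rlap_def using False by simp
  qed
qed

lemma Ck_rlap:
  assumes f: "\<And>n. Ck n f" and f0: "deriv f 0 = 0"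
  shows "Ck n (rlap f)"
proof -
  have "Ck n (deriv (deriv f))" using f[of "Suc (Suc n)"] by simp
  then have "Ck n (\<lambda>r. deriv (deriv f) r + 2 * K (\<lambda>_. 1) (deriv (deriv f)) r)"
    by (intro Ck_add Ck_mult Ck_const Ck_K) auto
  then show ?thesis using rlap_K1[OF f f0] by simp
qed

lemma rlap_diff:
  assumes f: "Ck 2 f" and g: "Ck 2 g"
  shows "rlap (\<lambda>r. f r - g r) = (\<lambda>r. rlap f r - rlap g r)"
proof -
  have df: "\<And>x. DERIV f x :> deriv f x" "\<And>x. DERIV g x :> deriv g x"
    using f g Ck_DERIV[of 1] by (auto simp: numeral_2_eq_2)
  have ddf: "\<And>x. DERIV (deriv f) x :> deriv (deriv f) x" "\<And>x. DERIV (deriv g) x :> deriv (deriv g) x"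
    using f g Ck_DERIV2[of 0] by (auto simp: numeral_2_eq_2)
  have e1: "deriv (\<lambda>r. f r - g r) = (\<lambda>x. deriv f x - deriv g x)"
    by (intro ext DERIV_imp_deriv) (auto intro!: derivative_eq_intros df)
  have e2: "deriv (\<lambda>x. deriv f x - deriv g x) = (\<lambda>x. deriv (deriv f) x - deriv (deriv g) x)"
    by (intro ext DERIV_imp_deriv) (auto intro!: derivative_eq_intros ddf)
  show ?thesis
  proof (rule ext)
    fix r :: real
    show "rlap (\<lambda>r. f r - g r) r = rlap f r - rlap g r"
      unfolding rlap_def e1 e2 by (cases "r = 0") (simp_all add: right_diff_distrib)
  qed
qed

lemma rlap_poly: "rlap (\<lambda>r. a + b * r^2 + c * r^4) = (\<lambda>r. 6 * b + 20 * c * r^2)"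
proof -
  have e1: "deriv (\<lambda>r. a + b * r^2 + c * r^4) = (\<lambda>r. 2 * b * r + 4 * c * r^3)"
    by (intro ext DERIV_imp_deriv) (auto intro!: derivative_eq_intros simp: eval_nat_numeral)
  have e2: "deriv (\<lambda>r. 2 * b * r + 4 * c * r^3) = (\<lambda>r. 2 * b + 12 * c * r^2)"
    by (intro ext DERIV_imp_deriv) (auto intro!: derivative_eq_intros simp: eval_nat_numeral)
  show ?thesis
  proof (rule ext)
    fix r :: real
    show "rlap (\<lambda>r. a + b * r^2 + c * r^4) r = 6 * b + 20 * c * r^2"
    proof (cases "r = 0")
      case True then show ?thesis unfolding rlap_def e1 e2 by simp
    next
      case False
      have "2 / r * (2 * b * r + 4 * c * r^3) = 4 * b + 8 * c * r^2"
        using False by (simp add: divide_simps power2_eq_square power3_eq_cube) (simp add: algebra_simps)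
      then show ?thesis unfolding rlap_def e1 e2 using False by simp
    qed
  qed
qed

lemma even_deriv0:
  assumes ev: "even_fun f" and d: "f differentiable at 0"
  shows "deriv f 0 = 0"
proof -
  have D: "DERIV f 0 :> deriv f 0" using d DERIV_deriv_iff_real_differentiable by blast
  have "(\<lambda>x. f (- x)) = f" using ev unfolding even_fun_def by auto
  then have "DERIV f 0 :> - deriv f 0"
    using DERIV_mirror[where f=f and x=0 and y="deriv f 0"] D by simp
  with D have "deriv f 0 = - deriv f 0" using DERIV_unique by blast
  then show ?thesis by simp
qed



section \<open>Bounds for the integral operator\<close>

definition psi :: "real \<Rightarrow> real" where
  "psi r = inverse ((1 + r^2)^2)"

lemma one_sq_pos: "0 < 1 + (r::real)^2"
  by (smt (verit) zero_le_power2)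

lemma sq_ne: "(1 + r^2)^2 \<noteq> (0::real)"
  using one_sq_pos[of r] by simp

lemma psi_cont: "continuous_on UNIV psi"
  unfolding psi_def[abs_def]
  by (intro continuous_intros) (use sq_ne in auto)

lemma psi_pos: "0 < psi r"
  unfolding psi_def using one_sq_pos[of r] by simp

lemma Iop_mono:
  assumes g1: "continuous_on UNIV g1" and g2: "continuous_on UNIV g2" and le: "\<And>t. g1 t \<le> g2 t"
  shows "Iop g1 r \<le> Iop g2 r"
proof -
  have "K (\<lambda>s. s * (1 - s)) g1 r \<le> K (\<lambda>s. s * (1 - s)) g2 r"
    unfolding K_def
  proof (rule integral_le)
    show "(\<lambda>s. s * (1 - s) * g1 (r * s)) integrable_on {0..1}"
      by (intro integrable_continuous_real continuous_intros continuous_on_compose2[OF g1]) auto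
    show "(\<lambda>s. s * (1 - s) * g2 (r * s)) integrable_on {0..1}"
      by (intro integrable_continuous_real continuous_intros continuous_on_compose2[OF g2]) auto
    show "s * (1 - s) * g1 (r * s) \<le> s * (1 - s) * g2 (r * s)" if "s \<in> {0..1}" for s
      using that le by (intro mult_left_mono) auto
  qed
  then show ?thesis unfolding Iop_def by (intro mult_left_mono) auto
qed

lemma Iop_const: "Iop (\<lambda>_. c) r = c * r^2 / 6"
  unfolding Iop_def K_def using int_rho by simp

lemma Iop_sq: "Iop (\<lambda>t. c * t^2) r = c * r^4 / 20"
proof -
  have "K (\<lambda>s. s * (1 - s)) (\<lambda>t. c * t^2) r = integral {0..1} (\<lambda>s. (c * r^2) * (s * (1 - s) * s^2))"
    unfolding K_def by (intro integral_cong) (simp add: power_mult_distrib)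
  also have "\<dots> = c * r^2 / 20" using int_rho_sq by simp
  finally show ?thesis unfolding Iop_def by (simp add: eval_nat_numeral)
qed

lemma Iop_nonneg:
  assumes g: "continuous_on UNIV g" and "\<And>t. 0 \<le> g t"
  shows "0 \<le> Iop g r"
  using Iop_mono[of "\<lambda>_. 0" g r] assms Iop_const[of 0 r] by simp

lemma Iop_psi: "Iop psi r \<le> 1/2"
proof -
  have "K (\<lambda>s. s * (1 - s)) psi r \<le> integral {0..1} (\<lambda>s. s * psi (r * s))"
    unfolding K_def
  proof (rule integral_le)
    show "(\<lambda>s. s * (1 - s) * psi (r * s)) integrable_on {0..1}"
      by (intro integrable_continuous_real continuous_intros continuous_on_compose2[OF psi_cont]) auto
    show "(\<lambda>s. s * psi (r * s)) integrable_on {0..1}"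
      by (intro integrable_continuous_real continuous_intros continuous_on_compose2[OF psi_cont]) auto
    show "s * (1 - s) * psi (r * s) \<le> s * psi (r * s)" if "s \<in> {0..1}" for s
      using that psi_pos[of "r * s"] by (intro mult_right_mono) (auto simp: algebra_simps)
  qed
  then have "Iop psi r \<le> r^2 * integral {0..1} (\<lambda>s. s * psi (r * s))"
    unfolding Iop_def by (intro mult_left_mono) auto
  also have "\<dots> = integral {0..1} (\<lambda>s. r^2 * s * psi (r * s))"
    by (simp add: mult.assoc)
  also have "\<dots> = (\<lambda>s. - (inverse (1 + r^2 * s^2) / 2)) 1 - (\<lambda>s. - (inverse (1 + r^2 * s^2) / 2)) 0"
  proof (rule integral_unique, rule FTC_int)
    fix s :: real
    have pos: "0 < 1 + r^2 * s^2" by (simp add: add_pos_nonneg)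
    show "DERIV (\<lambda>s. - (inverse (1 + r^2 * s^2) / 2)) s :> r^2 * s * psi (r * s)"
      unfolding psi_def using pos
      apply (auto intro!: derivative_eq_intros simp: power_mult_distrib)
      apply (simp add: field_simps power_mult_distrib power2_eq_square)
      done
  qed simp
  also have "\<dots> \<le> 1/2" by (simp add: add_pos_nonneg)
  finally show ?thesis .
qed

lemma I3_bounds:
  assumes g: "continuous_on UNIV g" and b: "\<And>t. 0 \<le> g t \<and> g t \<le> psi t"
  shows "0 \<le> Iop g r \<and> Iop g r \<le> 1/2"
    and "0 \<le> Iop (Iop g) r \<and> Iop (Iop g) r \<le> r^2/12"
    and "0 \<le> Iop (Iop (Iop g)) r \<and> Iop (Iop (Iop g)) r \<le> r^4/240"
proof -
  have b1: "0 \<le> Iop g t \<and> Iop g t \<le> 1/2" for t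
    using Iop_nonneg[OF g] b Iop_mono[OF g psi_cont, of t] Iop_psi[of t] by force
  then show "0 \<le> Iop g r \<and> Iop g r \<le> 1/2" .
  have c1: "continuous_on UNIV (Iop g)" by (rule Iop_cont[OF g])
  have b2: "0 \<le> Iop (Iop g) t \<and> Iop (Iop g) t \<le> t^2/12" for t
    using Iop_nonneg[OF c1] b1 Iop_mono[OF c1 continuous_on_const, of "1/2" t] Iop_const[of "1/2" t] by auto
  then show "0 \<le> Iop (Iop g) r \<and> Iop (Iop g) r \<le> r^2/12" .
  have c2: "continuous_on UNIV (Iop (Iop g))" by (rule Iop_cont[OF c1])
  have cs: "continuous_on UNIV (\<lambda>t::real. (1/12) * t^2)" by (intro continuous_intros)
  show "0 \<le> Iop (Iop (Iop g)) r \<and> Iop (Iop (Iop g)) r \<le> r^4/240"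
    using Iop_nonneg[OF c2] b2 Iop_mono[OF c2 cs, of r] Iop_sq[of "1/12" r] by auto
qed

lemma I3_mono:
  assumes g1: "continuous_on UNIV g1" and g2: "continuous_on UNIV g2" and le: "\<And>t. g1 t \<le> g2 t"
  shows "Iop (Iop (Iop g1)) r \<le> Iop (Iop (Iop g2)) r"
proof -
  have c1: "continuous_on UNIV (Iop g1)" "continuous_on UNIV (Iop g2)"
    using Iop_cont g1 g2 by auto
  have c2: "continuous_on UNIV (Iop (Iop g1))" "continuous_on UNIV (Iop (Iop g2))"
    using Iop_cont c1 by auto
  have l1: "\<And>t. Iop g1 t \<le> Iop g2 t" using Iop_mono[OF g1 g2 le] .
  have l2: "\<And>t. Iop (Iop g1) t \<le> Iop (Iop g2) t"
    using Iop_mono[OF c1 l1] .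
  show ?thesis using Iop_mono[OF c2 l2] .
qed



section \<open>Construction of the solution\<close>

definition pP :: "real \<Rightarrow> real \<Rightarrow> real \<Rightarrow> real" where
  "pP k e r = k + (- e / 6) * r^2 + (1/120) * r^4"

definition qQ :: "real \<Rightarrow> real \<Rightarrow> real \<Rightarrow> real" where
  "qQ k e r = k + (- e / 6) * r^2 + (1/240) * r^4"

definition gof :: "(real \<Rightarrow> real) \<Rightarrow> real \<Rightarrow> real" where
  "gof f r = inverse (f r ^ 3)"

definition Top :: "real \<Rightarrow> real \<Rightarrow> (real \<Rightarrow> real) \<Rightarrow> real \<Rightarrow> real" where
  "Top k e f r = pP k e r - Iop (Iop (Iop (gof f))) r"

definition Inv :: "real \<Rightarrow> real \<Rightarrow> (real \<Rightarrow> real) \<Rightarrow> bool" where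
  "Inv k e f \<longleftrightarrow> continuous_on UNIV f \<and> even_fun f \<and> (\<forall>r. qQ k e r \<le> f r \<and> f r \<le> pP k e r)"

lemma pP_cont: "continuous_on UNIV (pP k e)"
  unfolding pP_def[abs_def] by (intro continuous_intros)

lemma qQ_cont: "continuous_on UNIV (qQ k e)"
  unfolding qQ_def[abs_def] by (intro continuous_intros)

lemma pP_even: "even_fun (pP k e)"
  unfolding even_fun_def pP_def by simp

lemma qQ_even: "even_fun (qQ k e)"
  unfolding even_fun_def qQ_def by simp

lemma qQ_le_pP: "qQ k e r \<le> pP k e r"
  unfolding qQ_def pP_def by simp

lemma gof_cont:
  assumes f: "continuous_on UNIV f" and p: "\<And>r. 0 < f r"
  shows "continuous_on UNIV (gof f)"
proof -
  have "f r ^ 3 \<noteq> 0" for r using p[of r] by simp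
  then show ?thesis unfolding gof_def[abs_def] by (intro continuous_intros f) auto
qed

lemma gof_even: "even_fun f \<Longrightarrow> even_fun (gof f)"
  unfolding even_fun_def gof_def by simp

lemma gof_psi:
  assumes "1 + r^2 \<le> f r"
  shows "0 \<le> gof f r \<and> gof f r \<le> psi r"
proof -
  have f1: "1 \<le> f r" using assms by (smt (verit) zero_le_power2)
  have "(1 + r^2)^2 \<le> f r ^ 2" using assms by (intro power_mono) (auto simp: add_nonneg_nonneg)
  also have "\<dots> \<le> f r ^ 3" using f1 by (intro power_increasing) auto
  finally have "inverse (f r ^ 3) \<le> inverse ((1 + r^2)^2)"
    by (rule le_imp_inverse_le) (use one_sq_pos[of r] in simp)
  then show ?thesis unfolding gof_def psi_def using f1 by simp
qed

lemma psi_le1: "psi r \<le> 1"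
proof -
  have "1 \<le> (1 + r^2)^2" by (rule one_le_power) (simp)
  then show ?thesis unfolding psi_def by (simp add: inverse_le_1_iff)
qed

context
  fixes k e :: real
  assumes k: "100 \<le> k" and e: "0 < e" "e < 1"
begin

lemma q_ge: "1 + r^2 \<le> qQ k e r"
proof -
  have r4: "r^4 = r^2 * r^2" by (simp add: power_add[symmetric])
  have sq: "0 \<le> (r^2 - 140) * (r^2 - 140)" by simp
  have er: "e * r^2 \<le> r^2" by (intro mult_left_le_one_le) (use e in auto)
  have "(- e / 6) * r^2 = - (e * r^2) / 6" by simp
  then show ?thesis unfolding qQ_def r4 using sq er k by (simp add: algebra_simps) 
qed

lemma Inv_pos: "Inv k e f \<Longrightarrow> 1 + r^2 \<le> f r"
  unfolding Inv_def using q_ge by (meson order_trans)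

lemma Inv_pos': "Inv k e f \<Longrightarrow> 0 < f r"
  using Inv_pos[of f r] by (smt (verit) zero_le_power2)

lemma Inv_gof:
  assumes "Inv k e f"
  shows "continuous_on UNIV (gof f)" "even_fun (gof f)" "\<And>t. 0 \<le> gof f t \<and> gof f t \<le> psi t"
  using assms gof_cont gof_even gof_psi Inv_pos Inv_pos' unfolding Inv_def by auto

lemma Top_Inv:
  assumes f: "Inv k e f"
  shows "Inv k e (Top k e f)"
proof -
  note g = Inv_gof[OF f]
  have c3: "continuous_on UNIV (Iop (Iop (Iop (gof f))))"
    using Iop_cont g(1) by blast
  have "continuous_on UNIV (Top k e f)"
    unfolding Top_def[abs_def] by (intro continuous_on_diff pP_cont c3)
  moreover have "even_fun (Top k e f)"
    using pP_even even_Iop g(2) unfolding Top_def[abs_def] even_fun_def by simp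
  moreover have "qQ k e r \<le> Top k e f r \<and> Top k e f r \<le> pP k e r" for r
    using I3_bounds(3)[OF g(1) g(3), of r] unfolding Top_def pP_def qQ_def by simp
  ultimately show ?thesis unfolding Inv_def by blast
qed

lemma Top_mono:
  assumes f1: "Inv k e f1" and f2: "Inv k e f2" and le: "\<And>r. f1 r \<le> f2 r"
  shows "Top k e f1 r \<le> Top k e f2 r"
proof -
  have "gof f2 t \<le> gof f1 t" for t
    unfolding gof_def using Inv_pos'[OF f1, of t] le[of t]
    by (intro le_imp_inverse_le power_mono) auto
  then have "Iop (Iop (Iop (gof f2))) r \<le> Iop (Iop (Iop (gof f1))) r"
    using I3_mono Inv_gof(1)[OF f1] Inv_gof(1)[OF f2] by blast
  then show ?thesis unfolding Top_def by simp
qed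

lemma q_Inv: "Inv k e (qQ k e)"
  unfolding Inv_def using qQ_cont qQ_even qQ_le_pP by auto

definition U :: "nat \<Rightarrow> real \<Rightarrow> real" where
  "U n = (Top k e ^^ n) (qQ k e)"

lemma U_Suc: "U (Suc n) = Top k e (U n)"
  unfolding U_def by simp

lemma U_Inv: "Inv k e (U n)"
  by (induction n) (auto simp: U_def q_Inv Top_Inv)

lemma U_mono: "U n r \<le> U (Suc n) r"
proof (induction n arbitrary: r)
  case 0
  show ?case using Top_Inv[OF q_Inv] unfolding U_def Inv_def by simp
next
  case (Suc n)
  show ?case unfolding U_Suc[of "Suc n"] unfolding U_Suc[of n]
    by (rule Top_mono[OF U_Inv Top_Inv[OF U_Inv]]) (use Suc U_Suc in simp)
qed

definition V :: "real \<Rightarrow> real" where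
  "V r = (SUP n. U n r)"

lemma U_lim: "(\<lambda>n. U n r) \<longlonglongrightarrow> V r"
  unfolding V_def
proof (rule LIMSEQ_incseq_SUP)
  show "bdd_above (range (\<lambda>n. U n r))"
    using U_Inv unfolding Inv_def by (intro bdd_aboveI[of _ "pP k e r"]) blast
  show "incseq (\<lambda>n. U n r)" using U_mono by (intro incseq_SucI) 
qed

lemma V_bounds: "qQ k e r \<le> V r \<and> V r \<le> pP k e r"
proof
  show "qQ k e r \<le> V r"
    by (rule LIMSEQ_le_const[OF U_lim]) (use U_Inv in \<open>auto simp: Inv_def\<close>)
  show "V r \<le> pP k e r"
    by (rule LIMSEQ_le_const2[OF U_lim]) (use U_Inv in \<open>auto simp: Inv_def\<close>)
qed

lemma V_even: "even_fun V"
  unfolding even_fun_def V_def using U_Inv unfolding Inv_def even_fun_def by simp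

lemma V_pos: "1 + r^2 \<le> V r"
  using V_bounds q_ge order_trans by blast


lemma Iop_lim:
  assumes hc: "\<And>n. continuous_on UNIV (h n)" and hb: "\<And>n t. \<bar>h n t\<bar> \<le> 1 + t^2"
    and hl: "\<And>t. (\<lambda>n. h n t) \<longlonglongrightarrow> hl t"
  shows "(\<lambda>n. Iop (h n) r) \<longlonglongrightarrow> Iop hl r"
proof -
  have "(\<lambda>n. integral {0..1} (\<lambda>s. s * (1 - s) * h n (r * s))) \<longlonglongrightarrow> integral {0..1} (\<lambda>s. s * (1 - s) * hl (r * s))"
  proof (rule dominated_convergence(2)[where f="\<lambda>n s. s * (1 - s) * h n (r * s)"
        and h="\<lambda>s. s * (1 - s) * (1 + (r * s)^2)" and g="\<lambda>s. s * (1 - s) * hl (r * s)"])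
    show "(\<lambda>s. s * (1 - s) * h n (r * s)) integrable_on {0..1}" for n
      by (intro integrable_continuous_real continuous_intros continuous_on_compose2[OF hc]) auto
    show "(\<lambda>s. s * (1 - s) * (1 + (r * s)^2)) integrable_on {0..1::real}"
      by (intro integrable_continuous_real continuous_intros)
    show "norm (s * (1 - s) * h n (r * s)) \<le> s * (1 - s) * (1 + (r * s)^2)" if "s \<in> {0..1}" for n s
    proof -
      have "norm (s * (1 - s) * h n (r * s)) = (s * (1 - s)) * \<bar>h n (r * s)\<bar>"
        using that by (simp add: abs_mult)
      also have "\<dots> \<le> s * (1 - s) * (1 + (r * s)^2)"
        using that hb by (intro mult_left_mono) auto
      finally show ?thesis .
    qed
    show "(\<lambda>n. s * (1 - s) * h n (r * s)) \<longlonglongrightarrow> s * (1 - s) * hl (r * s)" for s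
      by (intro tendsto_mult_left hl)
  qed
  then show ?thesis unfolding Iop_def K_def by (intro tendsto_mult_left)
qed

lemma V_fix: "V r = Top k e V r"
proof -
  let ?g = "\<lambda>n. gof (U n)"
  have Vp: "0 < V t" for t using V_pos[of t] by (smt (verit) zero_le_power2)
  have gl: "(\<lambda>n. ?g n t) \<longlonglongrightarrow> gof V t" for t
    unfolding gof_def using Vp[of t] by (intro tendsto_intros U_lim) auto
  have gc: "continuous_on UNIV (?g n)" for n using Inv_gof(1)[OF U_Inv] .
  have gb0: "0 \<le> ?g n t \<and> ?g n t \<le> psi t" for n t using Inv_gof(3)[OF U_Inv] .
  have gb: "\<bar>?g n t\<bar> \<le> 1 + t^2" for n t
    using gb0[of n t] psi_le1[of t] by (smt (verit) zero_le_power2)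
  have l1: "(\<lambda>n. Iop (?g n) t) \<longlonglongrightarrow> Iop (gof V) t" for t by (rule Iop_lim[OF gc gb gl])
  have c1: "continuous_on UNIV (Iop (?g n))" for n using Iop_cont[OF gc] .
  have b1: "\<bar>Iop (?g n) t\<bar> \<le> 1 + t^2" for n t
  proof -
    have "\<bar>Iop (?g n) t\<bar> \<le> 1/2" using I3_bounds(1)[OF gc gb0, of n t] by (simp add: abs_le_iff)
    then show ?thesis using zero_le_power2[of t] by linarith
  qed
  have l2: "(\<lambda>n. Iop (Iop (?g n)) t) \<longlonglongrightarrow> Iop (Iop (gof V)) t" for t by (rule Iop_lim[OF c1 b1 l1])
  have c2: "continuous_on UNIV (Iop (Iop (?g n)))" for n using Iop_cont[OF c1] .
  have b2: "\<bar>Iop (Iop (?g n)) t\<bar> \<le> 1 + t^2" for n t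
  proof -
    have h: "0 \<le> Iop (Iop (?g n)) t \<and> Iop (Iop (?g n)) t \<le> t^2/12" using I3_bounds(2)[OF gc gb0, of n t] .
    then have "\<bar>Iop (Iop (?g n)) t\<bar> = Iop (Iop (?g n)) t" by simp
    then show ?thesis using h zero_le_power2[of t] by linarith
  qed
  have l3: "(\<lambda>n. Iop (Iop (Iop (?g n))) r) \<longlonglongrightarrow> Iop (Iop (Iop (gof V))) r" by (rule Iop_lim[OF c2 b2 l2])
  then have A: "(\<lambda>n. Top k e (U n) r) \<longlonglongrightarrow> Top k e V r"
    unfolding Top_def by (intro tendsto_diff tendsto_const)
  have B: "(\<lambda>n. Top k e (U n) r) \<longlonglongrightarrow> V r"
    using LIMSEQ_Suc[OF U_lim[of r]] unfolding U_Suc .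
  show ?thesis using LIMSEQ_unique[OF B A] .
qed

lemma K2_bound:
  assumes hc: "continuous_on UNIV h" and hb: "\<And>t. 0 \<le> h t \<and> h t \<le> t^2/12" and rR: "\<bar>r\<bar> \<le> R"
  shows "0 \<le> K (\<lambda>s. s^2) h r \<and> K (\<lambda>s. s^2) h r \<le> R^2/12"
proof
  have int: "(\<lambda>s. s^2 * h (r * s)) integrable_on {0..1}"
    by (intro integrable_continuous_real continuous_intros continuous_on_compose2[OF hc]) auto
  show "0 \<le> K (\<lambda>s. s^2) h r"
    unfolding K_def using hb by (intro integral_nonneg int) auto
  have "K (\<lambda>s. s^2) h r \<le> integral {0..1} (\<lambda>s::real. R^2/12)"
    unfolding K_def
  proof (rule integral_le[OF int])
    show "(\<lambda>s::real. R^2/12) integrable_on {0..1}" by (intro integrable_continuous_real continuous_intros)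
    fix s :: real assume s: "s \<in> {0..1}"
    have "\<bar>r * s\<bar> \<le> \<bar>R\<bar>" using s rR by (auto simp: abs_mult intro: mult_le_one order_trans[OF mult_right_le_one_le])
    then have "(r * s)^2 \<le> R^2" by (simp add: abs_le_square_iff)
    then have "h (r * s) \<le> R^2/12" using hb[of "r * s"] by simp
    moreover have "s^2 \<le> 1" using s by (simp add: power_le_one)
    ultimately have "s^2 * h (r * s) \<le> 1 * (R^2/12)"
      using hb[of "r * s"] by (intro mult_mono) auto
    then show "s^2 * h (r * s) \<le> R^2/12" by simp
  qed
  then show "K (\<lambda>s. s^2) h r \<le> R^2/12" using int_const01 by simp
qed

lemma Top_DERIV:
  assumes f: "Inv k e f"
  shows "DERIV (Top k e f) r :> ((- e / 6) * (2 * r) + (1/120) * (4 * r^3)) - r * K (\<lambda>s. s^2) (Iop (Iop (gof f))) r"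
proof -
  note g = Inv_gof[OF f]
  have c2: "continuous_on UNIV (Iop (Iop (gof f)))" using Iop_cont g(1) by blast
  have e2: "even_fun (Iop (Iop (gof f)))" using even_Iop g(2) by blast
  have dI: "DERIV (Iop (Iop (Iop (gof f)))) r :> r * K (\<lambda>s. s^2) (Iop (Iop (gof f))) r"
    by (rule I_DERIV[OF c2 e2])
  have dp: "DERIV (pP k e) r :> (- e / 6) * (2 * r) + (1/120) * (4 * r^3)"
    unfolding pP_def[abs_def] by (auto intro!: derivative_eq_intros simp: eval_nat_numeral)
  show ?thesis unfolding Top_def[abs_def] by (rule DERIV_diff[OF dp dI])
qed

lemma tri3: "\<bar>a + b - c\<bar> \<le> \<bar>a\<bar> + \<bar>b\<bar> + \<bar>c::real\<bar>"
  by arith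

lemma Top_lip:
  assumes f: "Inv k e f" and R: "0 \<le> R" and x: "x \<in> {-R..R}" and y: "y \<in> {-R..R}"
  shows "\<bar>Top k e f x - Top k e f y\<bar> \<le> (R + R^3) * \<bar>x - y\<bar>"
proof -
  note g = Inv_gof[OF f]
  have c2: "continuous_on UNIV (Iop (Iop (gof f)))" using Iop_cont g(1) by blast
  have b2: "\<And>t. 0 \<le> Iop (Iop (gof f)) t \<and> Iop (Iop (gof f)) t \<le> t^2/12"
    using I3_bounds(2)[OF g(1) g(3)] by blast
  let ?D = "\<lambda>r. ((- e / 6) * (2 * r) + (1/120) * (4 * r^3)) - r * K (\<lambda>s. s^2) (Iop (Iop (gof f))) r"
  have "norm (Top k e f x - Top k e f y) \<le> (R + R^3) * norm (x - y)"
  proof (rule field_differentiable_bound[where S="{-R..R}" and f'="?D"])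
    show "convex {-R..R}" by simp
    show "(Top k e f has_field_derivative ?D z) (at z within {-R..R})" for z
      using Top_DERIV[OF f] by (rule has_field_derivative_at_within)
    show "norm (?D z) \<le> R + R^3" if z: "z \<in> {-R..R}" for z
    proof -
      let ?Kz = "K (\<lambda>s. s^2) (Iop (Iop (gof f))) z"
      have zR: "\<bar>z\<bar> \<le> R" using z by auto
      have Kb: "0 \<le> ?Kz \<and> ?Kz \<le> R^2/12" by (rule K2_bound[OF c2 b2 zR])
      have a1: "\<bar>(- e / 6) * (2 * z)\<bar> \<le> R / 3"
      proof -
        have "\<bar>(- e / 6) * (2 * z)\<bar> = e * \<bar>z\<bar> / 3" using e by (simp add: abs_mult)
        also have "\<dots> \<le> 1 * R / 3" using e zR by (intro divide_right_mono mult_mono) auto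
        finally show ?thesis by simp
      qed
      have a2: "\<bar>(1/120) * (4 * z^3)\<bar> \<le> R^3 / 30"
      proof -
        have "\<bar>z\<bar>^3 \<le> R^3" using zR by (intro power_mono) auto
        then show ?thesis by (simp add: abs_mult power_abs)
      qed
      have a3: "\<bar>z * ?Kz\<bar> \<le> R * (R^2/12)"
      proof -
        have "\<bar>z * ?Kz\<bar> = \<bar>z\<bar> * ?Kz" using Kb by (simp add: abs_mult)
        also have "\<dots> \<le> R * (R^2/12)" by (rule mult_mono) (use Kb zR R in auto)
        finally show ?thesis .
      qed
      have "norm (?D z) \<le> R / 3 + R^3 / 30 + R * (R^2/12)"
        using tri3[of "(- e / 6) * (2 * z)" "(1/120) * (4 * z^3)" "z * ?Kz"] a1 a2 a3 by simp
      also have "\<dots> \<le> R + R^3"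
      proof -
        have "R * (R^2/12) = R^3/12" by (simp add: power3_eq_cube power2_eq_square)
        moreover have "0 \<le> R^3" using R by simp
        ultimately show ?thesis using R by linarith
      qed
      finally show ?thesis .
    qed
  qed (use x y in auto)
  then show ?thesis by simp
qed

lemma V_lip:
  assumes R: "0 \<le> R" and x: "x \<in> {-R..R}" and y: "y \<in> {-R..R}"
  shows "\<bar>V x - V y\<bar> \<le> (R + R^3) * \<bar>x - y\<bar>"
proof (rule LIMSEQ_le_const2)
  show "(\<lambda>n. \<bar>U (Suc n) x - U (Suc n) y\<bar>) \<longlonglongrightarrow> \<bar>V x - V y\<bar>"
    by (intro tendsto_intros LIMSEQ_Suc U_lim)
  show "\<exists>N. \<forall>n\<ge>N. \<bar>U (Suc n) x - U (Suc n) y\<bar> \<le> (R + R^3) * \<bar>x - y\<bar>"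
    unfolding U_Suc using Top_lip[OF U_Inv R x y] by blast
qed

lemma V_cont: "continuous_on UNIV V"
  unfolding continuous_on_eq_continuous_at[OF open_UNIV]
proof
  fix x :: real
  define R where "R = \<bar>x\<bar> + 1"
  have R0: "0 \<le> R" unfolding R_def by simp
  have "(R + R^3)-lipschitz_on {-R..R} V"
    by (rule lipschitz_onI) (use V_lip[OF R0] R0 in \<open>auto simp: dist_real_def\<close>)
  then have "continuous_on {-R..R} V" by (rule lipschitz_on_continuous_on)
  moreover have "x \<in> interior {-R..R}" unfolding R_def by auto
  ultimately show "isCont V x" by (rule continuous_on_interior)
qed


lemma V_pos': "0 < V r"
  using V_pos[of r] by (smt (verit) zero_le_power2)

lemma pP_eq: "pP k e = (\<lambda>r. k + (- e / 6) * r^2 + (1/120) * r^4)"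
  unfolding pP_def by (rule ext) simp

lemma V_eq: "V = (\<lambda>r. pP k e r - Iop (Iop (Iop (gof V))) r)"
  using V_fix unfolding Top_def by (intro ext) simp

lemma gofV_eq: "gof V = (\<lambda>r. inverse (V r ^ 3))"
  unfolding gof_def by (rule ext) simp

lemma V_Ck: "Ck n V"
proof (induction n)
  case 0 then show ?case using V_cont by simp
next
  case (Suc n)
  have "Ck n (gof V)" unfolding gofV_eq
    by (intro Ck_inverse Ck_pow Suc.IH) (use V_pos' in \<open>metis less_irrefl power_not_zero\<close>)
  have ev0: "even_fun (gof V)" using gof_even[OF V_even] .
  have c1: "Ck (Suc n) (Iop (gof V))" by (rule Ck_Iop[OF ev0 \<open>Ck n (gof V)\<close>])
  have c2: "Ck (Suc (Suc n)) (Iop (Iop (gof V)))" by (rule Ck_Iop[OF even_Iop[OF ev0] c1])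
  have c3: "Ck (Suc (Suc (Suc n))) (Iop (Iop (Iop (gof V))))"
    by (rule Ck_Iop[OF even_Iop[OF even_Iop[OF ev0]] c2])
  have "Ck (Suc (Suc (Suc n))) (\<lambda>r. pP k e r - Iop (Iop (Iop (gof V))) r)"
    unfolding pP_eq by (intro Ck_diff c3 Ck_poly)
  then have "Ck (Suc (Suc (Suc n))) V" using V_eq by simp
  then show ?case by (rule Ck_le[rotated]) simp
qed

lemma V_sol: "pos_entire_radial_sol k e V"
proof -
  define g0 where "g0 = gof V"
  define A where "A = Iop g0"
  define B where "B = Iop A"
  define C where "C = Iop B"
  have ev0: "even_fun g0" unfolding g0_def using gof_even[OF V_even] .
  have evA: "even_fun A" unfolding A_def using even_Iop[OF ev0] .
  have evB: "even_fun B" unfolding B_def using even_Iop[OF evA] .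
  have g0C: "Ck n g0" for n unfolding g0_def gofV_eq
    by (intro Ck_inverse Ck_pow V_Ck) (use V_pos' in \<open>metis less_irrefl power_not_zero\<close>)
  have AC: "Ck n A" for n unfolding A_def using Ck_Iop[OF ev0 g0C, of n] Ck_Suc_D by blast
  have BC: "Ck n B" for n unfolding B_def using Ck_Iop[OF evA AC, of n] Ck_Suc_D by blast
  have CC: "Ck n C" for n unfolding C_def using Ck_Iop[OF evB BC, of n] Ck_Suc_D by blast
  have Veq: "V = (\<lambda>r. pP k e r - C r)" unfolding C_def B_def A_def g0_def by (rule V_eq)
  define P2 where "P2 = (\<lambda>r::real. (- e) + (1/6) * r^2 + 0 * r^4)"
  define P3 where "P3 = (\<lambda>r::real. 1 + 0 * r^2 + 0 * r^4)"
  have pC: "Ck n (pP k e)" for n unfolding pP_eq by (rule Ck_poly)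
  have P2C: "Ck n P2" for n unfolding P2_def by (rule Ck_poly)
  have P3C: "Ck n P3" for n unfolding P3_def by (rule Ck_poly)
  have w_eq: "rlap V = (\<lambda>r. P2 r - B r)"
  proof -
    have "rlap V = (\<lambda>r. rlap (pP k e) r - rlap C r)"
      unfolding Veq by (rule rlap_diff[OF pC CC])
    also have "\<dots> = (\<lambda>r. P2 r - B r)"
      unfolding pP_eq rlap_poly P2_def C_def using rlap_Iop[OF evB BC] by (intro ext) simp
    finally show ?thesis .
  qed
  have v_eq: "rlap (rlap V) = (\<lambda>r. P3 r - A r)"
  proof -
    have "rlap (rlap V) = (\<lambda>r. rlap P2 r - rlap B r)"
      unfolding w_eq by (rule rlap_diff[OF P2C BC])
    also have "\<dots> = (\<lambda>r. P3 r - A r)"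
      unfolding P2_def rlap_poly P3_def B_def using rlap_Iop[OF evA AC] by (intro ext) simp
    finally show ?thesis .
  qed
  have z_eq: "rlap (rlap (rlap V)) = (\<lambda>r. 0 - g0 r)"
  proof -
    have "rlap (rlap (rlap V)) = (\<lambda>r. rlap P3 r - rlap A r)"
      unfolding v_eq by (rule rlap_diff[OF P3C AC])
    also have "\<dots> = (\<lambda>r. 0 - g0 r)"
      unfolding P3_def rlap_poly A_def using rlap_Iop[OF ev0 g0C] by (intro ext) simp
    finally show ?thesis .
  qed
  have evw: "even_fun (rlap V)" unfolding w_eq even_fun_def P2_def using evB unfolding even_fun_def by simp
  have evv: "even_fun (rlap (rlap V))" unfolding v_eq even_fun_def P3_def using evA unfolding even_fun_def by simp
  have wC: "Ck 1 (rlap V)" unfolding w_eq by (intro Ck_diff P2C BC)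
  have vC: "Ck 1 (rlap (rlap V))" unfolding v_eq by (intro Ck_diff P3C AC)
  show ?thesis
    unfolding pos_entire_radial_sol_def
  proof (intro conjI allI impI)
    show "smooth_fun V" by (rule smooth_from_Ck) (rule V_Ck)
    show "even_fun V" by (rule V_even)
    show "0 < V r" for r by (rule V_pos')
    show "rlap (rlap (rlap V)) r = - 1 / V r ^ 3" for r
      unfolding z_eq g0_def gof_def by (simp add: divide_inverse)
    show "V 0 = k" by (subst Veq) (simp add: C_def Iop_at0 pP_def)
    show "rlap V 0 = - e" unfolding w_eq P2_def B_def Iop_at0 by simp
    show "rlap (rlap V) 0 = 1" unfolding v_eq P3_def A_def Iop_at0 by simp
    show "deriv V 0 = 0" using V_Ck[of 1] by (intro even_deriv0 V_even) simp
    show "deriv (rlap V) 0 = 0" using wC by (intro even_deriv0 evw) simp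
    show "deriv (rlap (rlap V)) 0 = 0" using vC by (intro even_deriv0 evv) simp
  qed
qed

end



section \<open>Comparison principles\<close>

lemma dec_lemma:
  fixes phi phi' :: "real \<Rightarrow> real"
  assumes ab: "a \<le> b" and d: "\<And>x. a \<le> x \<Longrightarrow> x \<le> b \<Longrightarrow> DERIV phi x :> phi' x"
    and n: "\<And>x. a < x \<Longrightarrow> x < b \<Longrightarrow> phi' x \<le> 0"
  shows "phi b \<le> phi a"
proof (cases "a = b")
  case True then show ?thesis by simp
next
  case False
  with ab have "a < b" by simp
  from MVT2[OF this d] obtain z where z: "a < z" "z < b" "phi b - phi a = (b - a) * phi' z" by blast
  have "(b - a) * phi' z \<le> 0" using z n[of z] \<open>a < b\<close> by (intro mult_nonneg_nonpos) auto
  then show ?thesis using z by simp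
qed

lemma Ck2_facts:
  assumes "Ck 2 f"
  shows "\<And>x. DERIV f x :> deriv f x" "\<And>x. DERIV (deriv f) x :> deriv (deriv f) x"
  using assms Ck_DERIV[of 1 f] Ck_DERIV2[of 0 f] by (auto simp: numeral_2_eq_2)

lemma rlap_pos: "r \<noteq> 0 \<Longrightarrow> rlap f r = deriv (deriv f) r + 2 / r * deriv f r"
  unfolding rlap_def by simp

lemma Dneg:
  assumes f: "Ck 2 f" and f0: "deriv f 0 = 0" and neg: "\<And>r. 0 < r \<Longrightarrow> rlap f r \<le> 0"
    and r: "0 < r"
  shows "deriv f r \<le> 0"
proof -
  note D = Ck2_facts[OF f]
  let ?phi = "\<lambda>x. x^2 * deriv f x"
  let ?phi' = "\<lambda>x. 2 * x * deriv f x + x^2 * deriv (deriv f) x"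
  have "?phi r \<le> ?phi 0"
  proof (rule dec_lemma[where phi="?phi" and phi'="?phi'"])
    show "DERIV ?phi x :> ?phi' x" if "0 \<le> x" "x \<le> r" for x
      by (auto intro!: derivative_eq_intros D)
    show "?phi' x \<le> 0" if "0 < x" "x < r" for x
    proof -
      have "?phi' x = x^2 * rlap f x"
        using that by (simp add: rlap_pos field_simps power2_eq_square)
      also have "\<dots> \<le> 0" using neg[of x] that by (simp add: mult_nonneg_nonpos)
      finally show ?thesis .
    qed
  qed (use r in auto)
  then have "r^2 * deriv f r \<le> 0" by simp
  then show ?thesis using r by (simp add: mult_le_0_iff)
qed

lemma Mono:
  assumes f: "Ck 1 f" and n: "\<And>r. 0 < r \<Longrightarrow> deriv f r \<le> 0" and a: "0 \<le> a" and ab: "a \<le> b"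
  shows "f b \<le> f a"
proof (rule dec_lemma[OF ab, where phi=f and phi'="deriv f"])
  show "DERIV f x :> deriv f x" if "a \<le> x" "x \<le> b" for x using f Ck_DERIV[of 0 f] by simp
  show "deriv f x \<le> 0" if "a < x" "x < b" for x using that a n by simp
qed

lemma Cmp0:
  assumes f: "Ck 2 f" and f0: "deriv f 0 = 0" and neg: "\<And>r. 0 < r \<Longrightarrow> rlap f r \<le> 0"
    and r: "0 \<le> r"
  shows "f r \<le> f 0"
proof (rule Mono[where f=f and a=0 and b=r])
  show "Ck 1 f" using f Ck_le[of 1 2 f] by simp
  show "deriv f r \<le> 0" if "0 < r" for r using Dneg[OF f f0 neg that] .
qed (use r in auto)

lemma deriv_poly_diff0:
  assumes f: "Ck 2 f"
  shows "deriv (\<lambda>r. f r - (a + b * r^2 + c * r^4)) 0 = deriv f 0"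
        "deriv (\<lambda>r. (a + b * r^2 + c * r^4) - f r) 0 = - deriv f 0"
proof -
  note D = Ck2_facts[OF f]
  show "deriv (\<lambda>r. f r - (a + b * r^2 + c * r^4)) 0 = deriv f 0"
    by (rule DERIV_imp_deriv) (auto intro!: derivative_eq_intros D)
  show "deriv (\<lambda>r. (a + b * r^2 + c * r^4) - f r) 0 = - deriv f 0"
    by (rule DERIV_imp_deriv) (auto intro!: derivative_eq_intros D)
qed

lemma cmp_le:
  assumes f: "Ck 2 f" and f0: "deriv f 0 = 0"
    and h: "\<And>r. 0 < r \<Longrightarrow> rlap f r \<le> 6 * b + 20 * c * r^2" and r: "0 \<le> r"
  shows "f r \<le> f 0 + b * r^2 + c * r^4"
proof -
  let ?P = "\<lambda>r. f 0 + b * r^2 + c * r^4"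
  let ?d = "\<lambda>r. f r - ?P r"
  have PC: "Ck 2 ?P" by (rule Ck_poly)
  have dC: "Ck 2 ?d" by (intro Ck_diff f PC)
  have rd: "rlap ?d = (\<lambda>r. rlap f r - (6 * b + 20 * c * r^2))"
    using rlap_diff[OF f PC] rlap_poly by simp
  have "?d r \<le> ?d 0"
  proof (rule Cmp0[OF dC _ _ r])
    show "deriv ?d 0 = 0" using deriv_poly_diff0(1)[OF f] f0 by simp
    show "rlap ?d s \<le> 0" if "0 < s" for s using h[OF that] unfolding rd by simp
  qed
  then show ?thesis by simp
qed

lemma cmp_ge:
  assumes f: "Ck 2 f" and f0: "deriv f 0 = 0"
    and h: "\<And>r. 0 < r \<Longrightarrow> 6 * b + 20 * c * r^2 \<le> rlap f r" and r: "0 \<le> r"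
  shows "f 0 + b * r^2 + c * r^4 \<le> f r"
proof -
  let ?P = "\<lambda>r. f 0 + b * r^2 + c * r^4"
  let ?d = "\<lambda>r. ?P r - f r"
  have PC: "Ck 2 ?P" by (rule Ck_poly)
  have dC: "Ck 2 ?d" by (intro Ck_diff f PC)
  have rd: "rlap ?d = (\<lambda>r. (6 * b + 20 * c * r^2) - rlap f r)"
    using rlap_diff[OF PC f] rlap_poly by simp
  have "?d r \<le> ?d 0"
  proof (rule Cmp0[OF dC _ _ r])
    show "deriv ?d 0 = 0" using deriv_poly_diff0(2)[OF f] f0 by simp
    show "rlap ?d s \<le> 0" if "0 < s" for s using h[OF that] unfolding rd by simp
  qed
  then show ?thesis by simp
qed

lemma Gbound:
  assumes f: "Ck 2 f" and a: "0 < a" and h: "\<And>r. a \<le> r \<Longrightarrow> rlap f r \<le> - c"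
  shows "\<exists>M. \<forall>r\<ge>a. f r \<le> M - c * r^2 / 6"
proof -
  note D = Ck2_facts[OF f]
  let ?d = "\<lambda>x. f x + c * x^2 / 6"
  let ?d' = "\<lambda>x. deriv f x + c * x / 3"
  let ?phi = "\<lambda>x. x^2 * ?d' x"
  let ?phi' = "\<lambda>x. 2 * x * ?d' x + x^2 * (deriv (deriv f) x + c / 3)"
  define A where "A = ?phi a"
  have phiA: "?phi x \<le> A" if "a \<le> x" for x
    unfolding A_def
  proof (rule dec_lemma[OF that, where phi="?phi" and phi'="?phi'"])
    show "DERIV ?phi y :> ?phi' y" if "a \<le> y" "y \<le> x" for y
      by (auto intro!: derivative_eq_intros D)
    show "?phi' y \<le> 0" if "a < y" "y < x" for y
    proof -
      have y0: "y \<noteq> 0" using that a by simp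
      have "?phi' y = y^2 * (rlap f y + c)"
        using y0 by (simp add: rlap_pos field_simps power2_eq_square)
      also have "\<dots> \<le> 0" using h[of y] that by (intro mult_nonneg_nonpos) auto
      finally show ?thesis .
    qed
  qed
  let ?psi = "\<lambda>x. ?d x + A / x"
  have psiA: "?psi x \<le> ?psi a" if "a \<le> x" for x
  proof (rule dec_lemma[OF that, where phi="?psi" and phi' = "\<lambda>y. ?d' y - A / y^2"])
    show "DERIV ?psi y :> ?d' y - A / y^2" if "a \<le> y" "y \<le> x" for y
      using that a by (auto intro!: derivative_eq_intros D simp: power2_eq_square field_simps)
    show "?d' y - A / y^2 \<le> 0" if "a < y" "y < x" for y
    proof -
      have y0: "0 < y^2" using that a by simp
      have "y^2 * ?d' y \<le> A" using phiA[of y] that by simp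
      then have "?d' y \<le> A / y^2" using y0 by (simp add: field_simps)
      then show ?thesis by simp
    qed
  qed
  show ?thesis
  proof (intro exI allI impI)
    fix r assume r: "a \<le> r"
    have "- (A / r) \<le> \<bar>A\<bar> / a"
    proof -
      have "\<bar>A / r\<bar> = \<bar>A\<bar> / r" using r a by simp
      also have "\<dots> \<le> \<bar>A\<bar> / a" using r a by (intro divide_left_mono) auto
      finally show ?thesis by linarith
    qed
    then show "f r \<le> (?d a + A / a + \<bar>A\<bar> / a) - c * r^2 / 6"
      using psiA[OF r] by simp
  qed
qed



lemma partii:
  assumes sol: "pos_entire_radial_sol k e u"
  shows "e \<le> sqrt (6 * k / 5) \<and> (\<forall>r>0. k - e / 6 * r^2 \<le> u r \<and> u r \<le> k - e / 6 * r^2 + r^4 / 120)"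
proof -
  have sm: "smooth_fun u" and upos: "\<And>r. 0 \<le> r \<Longrightarrow> 0 < u r"
    and eq: "\<And>r. 0 \<le> r \<Longrightarrow> rlap (rlap (rlap u)) r = - 1 / (u r)^3"
    and u0: "u 0 = k" and w0: "rlap u 0 = - e" and v0: "rlap (rlap u) 0 = 1"
    and du0: "deriv u 0 = 0" and dw0: "deriv (rlap u) 0 = 0" and dv0: "deriv (rlap (rlap u)) 0 = 0"
    using sol unfolding pos_entire_radial_sol_def by auto
  define w where "w = rlap u"
  define v where "v = rlap w"
  have uC: "Ck n u" for n using Ck_from_smooth[OF sm] .
  have wC: "Ck n w" for n unfolding w_def using Ck_rlap[OF uC du0] .
  have vC: "Ck n v" for n unfolding v_def using Ck_rlap[OF wC dw0[folded w_def]] .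
  have dw0': "deriv w 0 = 0" using dw0 unfolding w_def .
  have dv0': "deriv v 0 = 0" using dv0 unfolding v_def w_def .
  have w0': "w 0 = - e" using w0 unfolding w_def .
  have v0': "v 0 = 1" using v0 unfolding v_def w_def .
  have hv: "rlap v r \<le> 0" if "0 < r" for r
  proof -
    have "0 < u r ^ 3" using upos[of r] that by simp
    then show ?thesis using eq[of r] that unfolding v_def w_def by simp
  qed
  have vd: "deriv v r \<le> 0" if "0 < r" for r using Dneg[OF vC dv0' hv that] .
  have v1C: "Ck 1 v" using vC .
  have v_le1: "v r \<le> 1" if "0 \<le> r" for r using Cmp0[OF vC dv0' hv that] v0' by simp
  have w_up: "w r \<le> - e + (1/6) * r^2" if "0 \<le> r" for r
    using cmp_le[OF wC dw0', of "1/6" 0 r] v_le1 that w0' unfolding v_def by simp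
  have u_up: "u r \<le> k + (- e / 6) * r^2 + (1/120) * r^4" if "0 \<le> r" for r
  proof -
    have "u r \<le> u 0 + (- e / 6) * r^2 + (1/120) * r^4"
    proof (rule cmp_le[OF uC du0 _ that])
      show "rlap u s \<le> 6 * (- e / 6) + 20 * (1/120) * s^2" if "0 < s" for s
        using w_up[of s] that unfolding w_def by simp
    qed
    then show ?thesis using u0 by simp
  qed
  have v_nonneg: "0 \<le> v r" if r: "0 \<le> r" for r
  proof (rule ccontr)
    assume "\<not> 0 \<le> v r"
    then have vr: "v r < 0" by simp
    define \<delta> where "\<delta> = - v r"
    have \<delta>: "0 < \<delta>" unfolding \<delta>_def using vr by simp
    have r0: "0 < r" using r vr v0' by (cases "r = 0") auto
    have hw: "rlap w s \<le> - \<delta>" if "r \<le> s" for s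
      using Mono[OF v1C vd r that] unfolding \<delta>_def v_def by simp
    obtain M where M: "\<And>s. r \<le> s \<Longrightarrow> w s \<le> M - \<delta> * s^2 / 6"
      using Gbound[OF wC r0 hw] by blast
    define r2 where "r2 = r + \<bar>6 * (M + 1) / \<delta>\<bar> + 1"
    have ab: "0 \<le> \<bar>6 * (M + 1) / \<delta>\<bar>" by simp
    then have r2: "0 < r2" "r \<le> r2" unfolding r2_def using r by linarith+
    have hu: "rlap u s \<le> - 1" if s: "r2 \<le> s" for s
    proof -
      have s1: "1 \<le> s" "r \<le> s" using s r ab unfolding r2_def by linarith+
      have "6 * (M + 1) / \<delta> \<le> s" using s r unfolding r2_def by linarith
      then have a: "6 * (M + 1) \<le> \<delta> * s" using \<delta> by (simp add: pos_divide_le_eq mult.commute)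
      have "\<delta> * s \<le> \<delta> * s^2" using s1 \<delta> by (intro mult_left_mono) (auto simp: power2_eq_square)
      then have "6 * (M + 1) \<le> \<delta> * s^2" using a by linarith
      then have "M + 1 \<le> \<delta> * s^2 / 6" by simp
      then have "M - \<delta> * s^2 / 6 \<le> - 1" by linarith
      then show ?thesis using M[OF s1(2)] unfolding w_def by simp
    qed
    obtain M' where M': "\<And>s. r2 \<le> s \<Longrightarrow> u s \<le> M' - 1 * s^2 / 6"
      using Gbound[OF uC r2(1), of 1] hu by blast
    define r3 where "r3 = r2 + \<bar>6 * M'\<bar> + 1"
    have r3: "r2 \<le> r3" "1 \<le> r3" "6 * M' < r3" unfolding r3_def using r2 by auto
    have "r3 \<le> r3^2" using r3(2) by (simp add: power2_eq_square)
    then have "u r3 < 0" using M'[OF r3(1)] r3(3) by simp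
    moreover have "0 < u r3" using upos[of r3] r3(2) by simp
    ultimately show False by simp
  qed
  have w_low: "- e \<le> w r" if "0 \<le> r" for r
    using cmp_ge[OF wC dw0', of 0 0 r] v_nonneg that w0' unfolding v_def by simp
  have u_low: "k + (- e / 6) * r^2 \<le> u r" if "0 \<le> r" for r
  proof -
    have "u 0 + (- e / 6) * r^2 + 0 * r^4 \<le> u r"
    proof (rule cmp_ge[OF uC du0 _ that])
      show "6 * (- e / 6) + 20 * 0 * s^2 \<le> rlap u s" if "0 < s" for s
        using w_low[of s] that unfolding w_def by simp
    qed
    then show ?thesis using u0 by simp
  qed
  have ebound: "e \<le> sqrt (6 * k / 5)"
  proof (cases "e \<le> 0")
    case True
    have "0 < k" using upos[of 0] u0 by simp
    then show ?thesis using True by (meson order_trans real_sqrt_ge_zero less_imp_le divide_nonneg_pos mult_nonneg_nonneg zero_le_numeral zero_less_numeral)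
  next
    case False
    have e0: "0 \<le> e" using False by linarith
    define r where "r = sqrt (10 * e)"
    have r0: "0 \<le> r" unfolding r_def using e0 by simp
    have r2: "r^2 = 10 * e" unfolding r_def using e0 by simp
    have "r^4 = r^2 * r^2" by (simp add: power_add[symmetric])
    then have r4: "r^4 = 100 * e^2" using r2 by (simp add: power2_eq_square)
    have "0 < u r" using upos[OF r0] .
    also have "u r \<le> k + (- e / 6) * r^2 + (1/120) * r^4" by (rule u_up[OF r0])
    also have "\<dots> = k - 5/6 * e^2" unfolding r2 r4 by (simp add: power2_eq_square field_simps)
    finally have "e^2 \<le> 6 * k / 5" by simp
    then show ?thesis by (rule real_le_rsqrt)
  qed
  show ?thesis
  proof (intro conjI allI impI ebound)
    fix r :: real assume r: "0 < r"
    show "k - e / 6 * r^2 \<le> u r" using u_low[of r] r by simp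
    show "u r \<le> k - e / 6 * r^2 + r^4 / 120" using u_up[of r] r by simp
  qed
qed

theorem lemma2:
  shows "\<exists>k0>0. \<forall>k\<ge>k0.
           (\<forall>\<epsilon>. 0 < \<epsilon> \<and> \<epsilon> < 1 \<longrightarrow> (\<exists>u. pos_entire_radial_sol k \<epsilon> u)) \<and>
           (\<forall>\<epsilon> u. pos_entire_radial_sol k \<epsilon> u \<longrightarrow>
              \<epsilon> \<le> sqrt (6 * k / 5) \<and>
              (\<forall>r>0. k - \<epsilon> / 6 * r^2 \<le> u r \<and> u r \<le> k - \<epsilon> / 6 * r^2 + r^4 / 120))"
proof -
  have A: "\<And>k \<epsilon>. 100 \<le> k \<Longrightarrow> 0 < \<epsilon> \<and> \<epsilon> < 1 \<Longrightarrow> \<exists>u. pos_entire_radial_sol k \<epsilon> u"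
    using V_sol by blast
  have B: "\<And>k \<epsilon> u. pos_entire_radial_sol k \<epsilon> u \<Longrightarrow> \<epsilon> \<le> sqrt (6 * k / 5) \<and>
              (\<forall>r>0. k - \<epsilon> / 6 * r^2 \<le> u r \<and> u r \<le> k - \<epsilon> / 6 * r^2 + r^4 / 120)"
    by (rule partii)
  show ?thesis
    by (rule exI[of _ 100]) (use A B in auto)
qed


end
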